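(* An $\widehat{\mathrm{FI}}$-module $M$ is an $\mathrm{FI}$-module (i.e. $M$ factors through the functor $\widehat{\mathrm{FI}}\to\mathrm{FI}$) if and only if, for all $n$, the element $(e,2)_n\in\widehat{\mathrm S}_n=\widehat{\mathrm{FI}}(n,n)$ acts trivially on $M_n$.
   Context: $\widehat{\mathrm S}_n=\{(\sigma,d)\in\mathrm S_n\times\mathbb Z: d\text{ odd}\iff\operatorname{sgn}\sigma=-1\}$ for $n\ge2$, trivial for $n=0,1$ (for $n\le1$ the element $(e,2)_n$ is the identity); $(e,2)_n$ is the element $(\mathrm{id},2)$. $\widehat{\mathrm{FI}}$: objects $n\in\mathbb N$, $\widehat{\mathrm{FI}}(n,m)=\widehat{\mathrm S}_m/i_2(\widehat{\mathrm S}_{m-n})$ ($i_1,i_2$ inclusions on first/last letters), composition $([s],[t])\mapsto[t\,i_1(s)]$. $\mathrm{FI}$ is the category of sets $[n]$ and injections, $\mathrm{FI}(n,m)=\mathrm S_m/\mathrm S_{m-n}$, and projection $\widehat{\mathrm S}_m\to\mathrm S_m$ induces a functor $\widehat{\mathrm{FI}}\to\mathrm{FI}$. Modules are functors to abelian groups. *)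

theory Defs
  imports "HOL-Combinatorics.Permutations" "HOL-Algebra.Group"
begin

(* Permutations of [n] = {0..<n}, composed as functions: (s * t) = s o t. *)
type_synonym perm = "nat \<Rightarrow> nat"
type_synonym shat = "perm \<times> int"

definition Sym :: "nat \<Rightarrow> perm set" where
  "Sym n = {\<sigma>. \<sigma> permutes {..<n}}"

(* S-hat_n as a subgroup of S_n x Z (componentwise product); trivial for n <= 1 *)
definition Shat :: "nat \<Rightarrow> shat set" where
  "Shat n = (if n \<le> 1 then {(id, 0)}
             else {(\<sigma>, d). \<sigma> permutes {..<n} \<and> (odd d \<longleftrightarrow> sign \<sigma> = -1)})"

definition shat_mult :: "shat \<Rightarrow> shat \<Rightarrow> shat" where
  "shat_mult s t = (fst s \<circ> fst t, snd s + snd t)"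

definition e2 :: "nat \<Rightarrow> shat" where
  "e2 n = (if n \<le> 1 then (id, 0) else (id, 2))"

(* inclusion on the last letters: permutations of [k] shifted to {m-k..<m} *)
definition shift_perm :: "nat \<Rightarrow> nat \<Rightarrow> perm \<Rightarrow> perm" where
  "shift_perm k m \<sigma> = (\<lambda>j. if j < m - k then j else \<sigma> (j - (m - k)) + (m - k))"

definition i2 :: "nat \<Rightarrow> nat \<Rightarrow> shat \<Rightarrow> shat" where
  "i2 k m s = (shift_perm k m (fst s), snd s)"

(* inclusion on the first letters: S-hat_k -> S-hat_m, k <= m (identity on pairs) *)
definition i1 :: "nat \<Rightarrow> nat \<Rightarrow> shat \<Rightarrow> shat" where
  "i1 k m s = s"

definition si2 :: "nat \<Rightarrow> nat \<Rightarrow> perm \<Rightarrow> perm" where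
  "si2 k m \<sigma> = shift_perm k m \<sigma>"

definition si1 :: "nat \<Rightarrow> nat \<Rightarrow> perm \<Rightarrow> perm" where
  "si1 k m \<sigma> = \<sigma>"

(* the morphism [s] in FI-hat(n,m) = S-hat_m / i2(S-hat_(m-n)) *)
definition FIh_of :: "nat \<Rightarrow> nat \<Rightarrow> shat \<Rightarrow> shat set" where
  "FIh_of n m s = (\<lambda>h. shat_mult s h) ` (i2 (m - n) m ` Shat (m - n))"

definition FIh :: "nat \<Rightarrow> nat \<Rightarrow> shat set set" where
  "FIh n m = (if n \<le> m then FIh_of n m ` Shat m else {})"

definition FIh_comp :: "nat \<Rightarrow> nat \<Rightarrow> nat \<Rightarrow> shat set \<Rightarrow> shat set \<Rightarrow> shat set" where
  "FIh_comp n m l f g =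
     FIh_of n l (shat_mult (SOME t. t \<in> g) (i1 m l (SOME s. s \<in> f)))"

definition FIh_id :: "nat \<Rightarrow> shat set" where
  "FIh_id n = FIh_of n n (id, 0)"

definition FI_of :: "nat \<Rightarrow> nat \<Rightarrow> perm \<Rightarrow> perm set" where
  "FI_of n m \<sigma> = (\<lambda>h. \<sigma> \<circ> h) ` (si2 (m - n) m ` Sym (m - n))"

definition FI :: "nat \<Rightarrow> nat \<Rightarrow> perm set set" where
  "FI n m = (if n \<le> m then FI_of n m ` Sym m else {})"

definition FI_comp :: "nat \<Rightarrow> nat \<Rightarrow> nat \<Rightarrow> perm set \<Rightarrow> perm set \<Rightarrow> perm set" where
  "FI_comp n m l f g = FI_of n l ((SOME t. t \<in> g) \<circ> si1 m l (SOME s. s \<in> f))"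

definition FI_id :: "nat \<Rightarrow> perm set" where
  "FI_id n = FI_of n n id"

(* the functor FI-hat -> FI induced by the projection S-hat_m -> S_m *)
definition proj :: "shat set \<Rightarrow> perm set" where
  "proj f = fst ` f"

(* M n is the abelian group M_n (written multiplicatively, HOL-Algebra),
   act n m f is the homomorphism M_n -> M_m assigned to f : n -> m *)
definition FIh_module :: "(nat \<Rightarrow> 'a monoid) \<Rightarrow> (nat \<Rightarrow> nat \<Rightarrow> shat set \<Rightarrow> 'a \<Rightarrow> 'a) \<Rightarrow> bool" where
  "FIh_module M act \<longleftrightarrow>
     (\<forall>n. comm_group (M n)) \<and>
     (\<forall>n m f. f \<in> FIh n m \<longrightarrow> act n m f \<in> hom (M n) (M m)) \<and>
     (\<forall>n. \<forall>x \<in> carrier (M n). act n n (FIh_id n) x = x) \<and>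
     (\<forall>n m l f g. f \<in> FIh n m \<longrightarrow> g \<in> FIh m l \<longrightarrow>
        (\<forall>x \<in> carrier (M n). act n l (FIh_comp n m l f g) x = act m l g (act n m f x)))"

definition FI_module :: "(nat \<Rightarrow> 'a monoid) \<Rightarrow> (nat \<Rightarrow> nat \<Rightarrow> perm set \<Rightarrow> 'a \<Rightarrow> 'a) \<Rightarrow> bool" where
  "FI_module M act \<longleftrightarrow>
     (\<forall>n. comm_group (M n)) \<and>
     (\<forall>n m f. f \<in> FI n m \<longrightarrow> act n m f \<in> hom (M n) (M m)) \<and>
     (\<forall>n. \<forall>x \<in> carrier (M n). act n n (FI_id n) x = x) \<and>
     (\<forall>n m l f g. f \<in> FI n m \<longrightarrow> g \<in> FI m l \<longrightarrow>
        (\<forall>x \<in> carrier (M n). act n l (FI_comp n m l f g) x = act m l g (act n m f x)))"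

definition factors_through_FI :: "(nat \<Rightarrow> 'a monoid) \<Rightarrow> (nat \<Rightarrow> nat \<Rightarrow> shat set \<Rightarrow> 'a \<Rightarrow> 'a) \<Rightarrow> bool" where
  "factors_through_FI M act \<longleftrightarrow>
     (\<exists>actN. FI_module M actN \<and>
        (\<forall>n m f. f \<in> FIh n m \<longrightarrow> (\<forall>x \<in> carrier (M n). act n m f x = actN n m (proj f) x)))"

end

theory Submission
  imports Defs
begin

definition sh :: "nat \<Rightarrow> perm \<Rightarrow> perm" where
  "sh c \<rho> = (\<lambda>j. if j < c then j else \<rho> (j - c) + c)"

lemma shift_perm_sh: "shift_perm k m = sh (m - k)"
  by (rule ext) (simp add: shift_perm_def sh_def)

lemma sh_comp: "sh c (\<alpha> \<circ> \<beta>) = sh c \<alpha> \<circ> sh c \<beta>"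
  by (rule ext) (simp add: sh_def)

lemma sh_id[simp]: "sh c id = id"
  by (rule ext) (simp add: sh_def)

lemma sh_permutes:
  assumes "\<rho> permutes {..<k}"
  shows "sh c \<rho> permutes {..<k+c}"
proof -
  have "sh c (inv_into UNIV \<rho>) \<circ> sh c \<rho> = id" "sh c \<rho> \<circ> sh c (inv_into UNIV \<rho>) = id"
    using assms by (simp_all add: sh_comp[symmetric] permutes_inv_o)
  then have b: "bij (sh c \<rho>)" using o_bij by blast
  have "sh c \<rho> x = x" if "x \<notin> {..<k+c}" for x
    using that assms permutes_not_in[OF assms, of "x - c"]
    by (auto simp: sh_def)
  then show ?thesis using b unfolding permutes_def bij_iff by blast
qed

lemma sh_transpose: "sh c (transpose a b) = transpose (a+c) (b+c)"
  by (rule ext) (auto simp: sh_def transpose_def)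

lemma sign_sh:
  assumes "\<rho> permutes {..<k}"
  shows "sign (sh c \<rho>) = sign \<rho>"
  using assms finite_lessThan
proof (induction rule: permutes_induct)
  case id
  then show ?case by (metis sh_id sign_id)
next
  case (swap a b p)
  have pp: "permutation p" using swap(4) by (auto simp: permutation_permutes)
  have pp2: "permutation (sh c p)" using sh_permutes[OF swap(4)] by (auto simp: permutation_permutes)
  have "sign (sh c (transpose a b \<circ> p)) = sign (transpose (a+c) (b+c) \<circ> sh c p)"
    by (simp only: sh_comp sh_transpose)
  also have "\<dots> = sign (transpose (a+c) (b+c)) * sign (sh c p)"
    by (rule sign_compose[OF permutation_swap_id pp2])
  also have "\<dots> = sign (transpose a b) * sign p"
    using swap by (simp add: sign_swap_id)
  also have "\<dots> = sign (transpose a b \<circ> p)"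
    by (rule sign_compose[OF permutation_swap_id pp, symmetric])
  finally show ?case .
qed

lemma sign_cases2: "sign \<sigma> = 1 \<or> sign \<sigma> = -1"
  by (simp add: sign_def)

lemma Sym_le1: "k \<le> 1 \<Longrightarrow> Sym k = {id}"
proof -
  assume "k \<le> 1"
  then have "k = 0 \<or> k = 1" by auto
  then show ?thesis
  proof
    assume "k = 0" then show ?thesis by (auto simp: Sym_def)
  next
    assume "k = 1"
    then have "{..<k} = {0}" by auto
    then show ?thesis by (auto simp: Sym_def)
  qed
qed

lemma Shat_le1: "k \<le> 1 \<Longrightarrow> Shat k = {(id,0)}"
  by (simp add: Shat_def)

lemma Shat_mem: "2 \<le> k \<Longrightarrow> (\<sigma>,d) \<in> Shat k \<longleftrightarrow> \<sigma> permutes {..<k} \<and> (odd d \<longleftrightarrow> sign \<sigma> = -1)"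
  by (simp add: Shat_def)

lemma id_Shat: "(id,0) \<in> Shat k"
  by (cases "k \<le> 1") (auto simp: Shat_def permutes_id)

lemma fst_Shat: "fst ` Shat k = Sym k"
proof (cases "k \<le> 1")
  case True then show ?thesis by (simp add: Shat_le1 Sym_le1)
next
  case False
  show ?thesis
  proof
    show "fst ` Shat k \<subseteq> Sym k" using False by (auto simp: Shat_def Sym_def)
    show "Sym k \<subseteq> fst ` Shat k"
    proof
      fix \<sigma> assume a: "\<sigma> \<in> Sym k"
      define d :: int where "d = (if sign \<sigma> = -1 then 1 else 0)"
      have "(\<sigma>, d) \<in> Shat k" using a False by (auto simp: Shat_def Sym_def d_def)
      then show "\<sigma> \<in> fst ` Shat k" by force
    qed
  qed
qed

lemma i2_id[simp]: "i2 k m (id,0) = (id,0)"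
  by (simp add: i2_def shift_perm_sh)

lemma shat_mult_id[simp]: "shat_mult s (id,0) = s"
  by (simp add: shat_mult_def)

lemma FIh_of_small: "m - n \<le> 1 \<Longrightarrow> FIh_of n m s = {s}"
  by (simp add: FIh_of_def Shat_le1)

lemma i2_Shat:
  assumes "k \<le> m" "h \<in> Shat k"
  shows "i2 k m h \<in> Shat m"
proof (cases "k \<le> 1")
  case True then show ?thesis using assms by (simp add: Shat_le1 id_Shat)
next
  case False
  obtain \<rho> d where h: "h = (\<rho>, d)" by (cases h)
  have p: "\<rho> permutes {..<k}" and par: "odd d \<longleftrightarrow> sign \<rho> = -1"
    using assms False h by (auto simp: Shat_def)
  have "sh (m-k) \<rho> permutes {..<k + (m-k)}" by (rule sh_permutes[OF p])
  moreover have "k + (m - k) = m" using assms by simp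
  ultimately show ?thesis using False assms par sign_sh[OF p]
    by (auto simp: h i2_def shift_perm_sh Shat_def)
qed

lemma Shat_mult_closed:
  assumes "s \<in> Shat k" "t \<in> Shat k"
  shows "shat_mult s t \<in> Shat k"
proof (cases "k \<le> 1")
  case True then show ?thesis using assms by (simp add: Shat_le1)
next
  case False
  obtain \<sigma> d where s: "s = (\<sigma>, d)" by (cases s)
  obtain \<tau> e where t: "t = (\<tau>, e)" by (cases t)
  have ps: "\<sigma> permutes {..<k}" "odd d \<longleftrightarrow> sign \<sigma> = -1"
   and pt: "\<tau> permutes {..<k}" "odd e \<longleftrightarrow> sign \<tau> = -1"
    using assms False s t by (auto simp: Shat_def)
  have "sign (\<sigma> \<circ> \<tau>) = sign \<sigma> * sign \<tau>"
    using ps pt by (intro sign_compose) (auto simp: permutation_permutes)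
  moreover have "\<sigma> \<circ> \<tau> permutes {..<k}" using ps pt by (simp add: permutes_compose)
  ultimately show ?thesis using False ps pt sign_cases2[of \<sigma>] sign_cases2[of \<tau>]
    by (auto simp: s t shat_mult_def Shat_def)
qed

lemma Shat_mono:
  assumes "k \<le> l" "s \<in> Shat k" shows "s \<in> Shat l"
proof (cases "k \<le> 1")
  case True then show ?thesis using assms by (simp add: Shat_le1 id_Shat)
next
  case False
  then show ?thesis using assms permutes_subset[of _ "{..<k}" "{..<l}"]
    by (auto simp: Shat_def)
qed

lemma FIh_of_sub:
  assumes "n \<le> m" "s \<in> Shat m"
  shows "FIh_of n m s \<subseteq> Shat m"
  using assms by (auto simp: FIh_of_def intro!: Shat_mult_closed i2_Shat)

lemma proj_FIh_of: "proj (FIh_of n m s) = FI_of n m (fst s)"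
proof -
  have "proj (FIh_of n m s) = (\<lambda>\<sigma>. fst s \<circ> si2 (m-n) m \<sigma>) ` (fst ` Shat (m-n))"
    unfolding proj_def FIh_of_def image_image
    by (simp add: shat_mult_def i2_def si2_def)
  also have "\<dots> = FI_of n m (fst s)"
    by (simp add: fst_Shat FI_of_def image_image)
  finally show ?thesis .
qed

lemma si2_sh: "n \<le> m \<Longrightarrow> si2 (m-n) m \<rho> = sh n \<rho>"
  by (simp add: si2_def shift_perm_sh)

lemma FI_of_mem: "n \<le> m \<Longrightarrow> y \<in> FI_of n m \<sigma> \<longleftrightarrow> (\<exists>\<rho>\<in>Sym (m-n). y = \<sigma> \<circ> sh n \<rho>)"
  by (auto simp: FI_of_def si2_sh)

lemma FI_of_self: "n \<le> m \<Longrightarrow> \<sigma> \<in> FI_of n m \<sigma>"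
proof -
  assume "n \<le> m"
  moreover have "id \<in> Sym (m-n)" by (simp add: Sym_def permutes_id)
  moreover have "\<sigma> = \<sigma> \<circ> sh n id" by simp
  ultimately show ?thesis using FI_of_mem[of n m \<sigma> \<sigma>] by blast
qed

lemma FI_of_right:
  assumes "n \<le> m" "\<pi> \<in> Sym (m-n)"
  shows "FI_of n m (c \<circ> sh n \<pi>) = FI_of n m c"
proof
  have p: "\<pi> permutes {..<m-n}" using assms by (simp add: Sym_def)
  show "FI_of n m (c \<circ> sh n \<pi>) \<subseteq> FI_of n m c"
  proof
    fix y assume "y \<in> FI_of n m (c \<circ> sh n \<pi>)"
    then obtain \<alpha> where a: "\<alpha> \<in> Sym (m-n)" "y = c \<circ> sh n \<pi> \<circ> sh n \<alpha>"
      using assms by (auto simp: FI_of_mem)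
    have "y = c \<circ> sh n (\<pi> \<circ> \<alpha>)" using a by (simp add: sh_comp o_assoc)
    moreover have "\<pi> \<circ> \<alpha> \<in> Sym (m-n)" using a p by (simp add: Sym_def permutes_compose)
    ultimately show "y \<in> FI_of n m c" using assms by (auto simp: FI_of_mem)
  qed
  show "FI_of n m c \<subseteq> FI_of n m (c \<circ> sh n \<pi>)"
  proof
    fix y assume "y \<in> FI_of n m c"
    then obtain \<alpha> where a: "\<alpha> \<in> Sym (m-n)" "y = c \<circ> sh n \<alpha>"
      using assms by (auto simp: FI_of_mem)
    have "\<pi> \<circ> (inv_into UNIV \<pi> \<circ> \<alpha>) = \<alpha>"
      using permutes_inv_o(1)[OF p] by (metis (no_types) o_assoc id_o)
    then have "y = (c \<circ> sh n \<pi>) \<circ> sh n (inv_into UNIV \<pi> \<circ> \<alpha>)"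
      using a by (metis sh_comp o_assoc)
    moreover have "inv_into UNIV \<pi> \<circ> \<alpha> \<in> Sym (m-n)"
      using a p by (simp add: Sym_def permutes_compose permutes_inv)
    ultimately show "y \<in> FI_of n m (c \<circ> sh n \<pi>)" using assms by (auto simp: FI_of_mem)
  qed
qed

lemma sh_sh: "n \<le> m \<Longrightarrow> sh m \<tau> = sh n (sh (m-n) \<tau>)"
  by (rule ext) (auto simp: sh_def)

lemma FI_WD:
  assumes "n \<le> m" "m \<le> l" "b permutes {..<m}" "\<tau> \<in> Sym (l-m)" "\<rho> \<in> Sym (m-n)"
  shows "FI_of n l ((a \<circ> sh m \<tau>) \<circ> (b \<circ> sh n \<rho>)) = FI_of n l (a \<circ> b)"
proof -
  have comm: "sh m \<tau> \<circ> b = b \<circ> sh m \<tau>"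
  proof (rule ext)
    fix j
    show "(sh m \<tau> \<circ> b) j = (b \<circ> sh m \<tau>) j"
    proof (cases "j < m")
      case True
      then have "b j < m" using assms(3) permutes_in_image by fastforce
      then show ?thesis using True by (simp add: sh_def)
    next
      case False
      then have "b j = j" using permutes_not_in[OF assms(3)] by simp
      moreover have "b (\<tau> (j - m) + m) = \<tau> (j - m) + m"
        using permutes_not_in[OF assms(3)] by simp
      ultimately show ?thesis using False by (simp add: sh_def)
    qed
  qed
  have t: "\<tau> permutes {..<l-m}" and r: "\<rho> permutes {..<m-n}" using assms by (auto simp: Sym_def)
  have "sh (m-n) \<tau> permutes {..<(l-m)+(m-n)}" by (rule sh_permutes[OF t])
  moreover have "(l-m)+(m-n) = l-n" using assms by simp
  ultimately have t2: "sh (m-n) \<tau> permutes {..<l-n}" by simp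
  have r2: "\<rho> permutes {..<l-n}" using r assms by (auto intro: permutes_subset)
  have "(a \<circ> sh m \<tau>) \<circ> (b \<circ> sh n \<rho>) = (a \<circ> b) \<circ> (sh m \<tau> \<circ> sh n \<rho>)"
    using comm by (metis o_assoc)
  also have "\<dots> = (a \<circ> b) \<circ> sh n (sh (m-n) \<tau> \<circ> \<rho>)"
    using assms by (simp add: sh_comp sh_sh[of n m])
  finally show ?thesis
    using FI_of_right[of n l "sh (m-n) \<tau> \<circ> \<rho>" "a \<circ> b"] assms t2 r2
    by (simp add: Sym_def permutes_compose)
qed

lemma FIh_char:
  assumes "n \<le> m" "2 \<le> m - n" "s \<in> Shat m"
  shows "x \<in> FIh_of n m s \<longleftrightarrow> x \<in> Shat m \<and> fst x \<in> FI_of n m (fst s)"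
proof
  assume "x \<in> FIh_of n m s"
  then show "x \<in> Shat m \<and> fst x \<in> FI_of n m (fst s)"
    using FIh_of_sub[OF assms(1,3)] proj_FIh_of[of n m s] by (auto simp: proj_def)
next
  assume a: "x \<in> Shat m \<and> fst x \<in> FI_of n m (fst s)"
  then obtain \<rho> where r: "\<rho> \<in> Sym (m-n)" "fst x = fst s \<circ> sh n \<rho>"
    using assms by (auto simp: FI_of_mem)
  have rp: "\<rho> permutes {..<m-n}" using r by (simp add: Sym_def)
  have m2: "2 \<le> m" using assms by simp
  obtain \<sigma> d where s: "s = (\<sigma>, d)" by (cases s)
  obtain \<sigma>' d' where x: "x = (\<sigma>', d')" by (cases x)
  have ps: "\<sigma> permutes {..<m}" "odd d \<longleftrightarrow> sign \<sigma> = -1"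
    using assms(3) m2 s by (auto simp: Shat_def)
  have px: "odd d' \<longleftrightarrow> sign \<sigma>' = -1" using a m2 x by (auto simp: Shat_def)
  have "sh n \<rho> permutes {..<(m-n)+n}" by (rule sh_permutes[OF rp])
  then have "permutation (sh n \<rho>)" by (auto simp: permutation_permutes)
  then have "sign \<sigma>' = sign \<sigma> * sign \<rho>"
    using r ps sign_sh[OF rp, of n] by (simp add: x s sign_compose permutation_permutes)
      (metis finite_lessThan permutation_permutes sign_compose)
  then have "(\<rho>, d' - d) \<in> Shat (m-n)"
    using assms rp ps px sign_cases2[of \<sigma>] sign_cases2[of \<rho>] by (auto simp: Shat_def)
  moreover have "x = shat_mult s (i2 (m-n) m (\<rho>, d' - d))"
    using r assms by (simp add: x s shat_mult_def i2_def shift_perm_sh)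
  ultimately show "x \<in> FIh_of n m s" by (auto simp: FIh_of_def)
qed

lemma FIh_memE:
  assumes "f \<in> FIh n m"
  obtains s where "n \<le> m" "s \<in> Shat m" "f = FIh_of n m s"
  using assms by (auto simp: FIh_def split: if_splits)

lemma e2_Shat: "e2 n \<in> Shat n"
  by (cases "n \<le> 1") (auto simp: e2_def Shat_def permutes_id)

lemma FIh_in_carrier:
  assumes mod: "FIh_module M act" and f: "f \<in> FIh n m" and x: "x \<in> carrier (M n)"
  shows "act n m f x \<in> carrier (M m)"
  using mod f x unfolding FIh_module_def hom_def by blast

lemma step2:
  assumes mod: "FIh_module M act"
    and hyp: "\<forall>n. \<forall>x \<in> carrier (M n). act n n (FIh_of n n (e2 n)) x = x"
    and nm: "n \<le> m" "m - n \<le> 1" "2 \<le> m" and s: "(\<sigma>, d) \<in> Shat m"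
    and x: "x \<in> carrier (M n)"
  shows "act n m {(\<sigma>, d + 2)} x = act n m {(\<sigma>, d)} x"
proof -
  let ?f = "{(\<sigma>, d)}" and ?g = "FIh_of m m (e2 m)"
  have f: "?f \<in> FIh n m" using nm s FIh_of_small[of m n "(\<sigma>,d)"] by (auto simp: FIh_def)
  have g: "?g \<in> FIh m m" using e2_Shat by (auto simp: FIh_def)
  have ge: "?g = {(id, 2)}" using nm by (simp add: FIh_of_small e2_def)
  have "FIh_comp n m m ?f ?g = {(\<sigma>, d + 2)}"
    using nm by (simp add: FIh_comp_def ge i1_def FIh_of_small shat_mult_def add.commute)
  then have "act n m {(\<sigma>, d + 2)} x = act m m ?g (act n m ?f x)"
    using mod f g x unfolding FIh_module_def by metis
  also have "\<dots> = act n m ?f x"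
    using hyp FIh_in_carrier[OF mod f x] by blast
  finally show ?thesis .
qed

lemma stepN:
  assumes mod: "FIh_module M act"
    and hyp: "\<forall>n. \<forall>x \<in> carrier (M n). act n n (FIh_of n n (e2 n)) x = x"
    and nm: "n \<le> m" "m - n \<le> 1" "2 \<le> m" and s: "(\<sigma>, d) \<in> Shat m"
    and x: "x \<in> carrier (M n)"
  shows "act n m {(\<sigma>, d + 2 * int j)} x = act n m {(\<sigma>, d)} x"
proof (induction j)
  case 0 then show ?case by simp
next
  case (Suc j)
  have "(\<sigma>, d + 2 * int j) \<in> Shat m" using s nm by (auto simp: Shat_def)
  then have "act n m {(\<sigma>, d + 2 * int j + 2)} x = act n m {(\<sigma>, d + 2 * int j)} x"
    by (rule step2[OF mod hyp nm _ x])
  then show ?case using Suc by (simp add: algebra_simps)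
qed

lemma fiber:
  assumes mod: "FIh_module M act"
    and hyp: "\<forall>n. \<forall>x \<in> carrier (M n). act n n (FIh_of n n (e2 n)) x = x"
    and f: "f \<in> FIh n m" and f': "f' \<in> FIh n m" and pr: "proj f = proj f'"
    and x: "x \<in> carrier (M n)"
  shows "act n m f x = act n m f' x"
proof -
  obtain s where s: "n \<le> m" "s \<in> Shat m" "f = FIh_of n m s" using f by (rule FIh_memE)
  obtain s' where s': "s' \<in> Shat m" "f' = FIh_of n m s'" using f' by (rule FIh_memE)
  have eqFI: "FI_of n m (fst s) = FI_of n m (fst s')" using pr s s' by (simp add: proj_FIh_of)
  show ?thesis
  proof (cases "2 \<le> m - n")
    case True
    have "FIh_of n m s = FIh_of n m s'"
      using FIh_char[OF s(1) True s(2)] FIh_char[OF s(1) True s'(1)] eqFI by blast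
    then show ?thesis using s s' by simp
  next
    case False
    then have small: "m - n \<le> 1" by simp
    have "FI_of n m \<sigma> = {\<sigma>}" for \<sigma>
      using small by (simp add: FI_of_def Sym_le1 si2_sh[OF s(1)])
    then have fsteq: "fst s = fst s'" using eqFI by simp
    show ?thesis
    proof (cases "m \<le> 1")
      case True
      then have "s = s'" using s s' by (simp add: Shat_le1)
      then show ?thesis using s s' by simp
    next
      case False
      obtain \<sigma> d where sd: "s = (\<sigma>, d)" by (cases s)
      obtain d' where sd': "s' = (\<sigma>, d')" using fsteq sd by (cases s') auto
      have "odd d \<longleftrightarrow> odd d'" using s(2) s'(1) sd sd' False by (auto simp: Shat_def)
      then have "even (d' - d)" by simp
      then obtain q where q: "d' - d = 2 * q" by (rule dvdE)
      have m2: "2 \<le> m" using False by simp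
      have fs: "f = {(\<sigma>, d)}" "f' = {(\<sigma>, d')}" using s s' sd sd' small by (simp_all add: FIh_of_small)
      show ?thesis
      proof (cases "q \<ge> 0")
        case True
        have "d' = d + 2 * int (nat q)" using q True by simp
        then show ?thesis using stepN[OF mod hyp s(1) small m2 _ x, of \<sigma> d "nat q"] s sd fs by simp
      next
        case False
        have "d = d' + 2 * int (nat (-q))" using q False by simp
        then show ?thesis using stepN[OF mod hyp s(1) small m2 _ x, of \<sigma> d' "nat (-q)"] s' sd' fs by simp
      qed
    qed
  qed
qed

lemma FIh_of_nonempty: "shat_mult s (id,0) \<in> FIh_of n m s"
proof -
  have "(id,0) \<in> i2 (m-n) m ` Shat (m-n)" using id_Shat i2_id by (metis image_eqI)
  then show ?thesis unfolding FIh_of_def by blast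
qed

lemma comp_proj:
  assumes f: "f \<in> FIh n m" and g: "g \<in> FIh m l"
  shows "FIh_comp n m l f g \<in> FIh n l \<and> proj (FIh_comp n m l f g) = FI_comp n m l (proj f) (proj g)"
proof -
  obtain s0 where s0: "n \<le> m" "s0 \<in> Shat m" "f = FIh_of n m s0" using f by (rule FIh_memE)
  obtain t0 where t0: "m \<le> l" "t0 \<in> Shat l" "g = FIh_of m l t0" using g by (rule FIh_memE)
  define s where "s = (SOME s. s \<in> f)"
  define t where "t = (SOME t. t \<in> g)"
  have sf: "s \<in> f" unfolding s_def using FIh_of_nonempty s0 by (metis someI)
  have tg: "t \<in> g" unfolding t_def using FIh_of_nonempty t0 by (metis someI)
  have sS: "s \<in> Shat l" using sf s0 t0 FIh_of_sub Shat_mono by blast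
  have tS: "t \<in> Shat l" using tg t0 FIh_of_sub by blast
  have c: "FIh_comp n m l f g = FIh_of n l (shat_mult t s)"
    by (simp add: FIh_comp_def s_def t_def i1_def)
  have mem: "FIh_comp n m l f g \<in> FIh n l"
    using c s0 t0 Shat_mult_closed[OF tS sS] by (auto simp: FIh_def)
  have pf: "proj f = FI_of n m (fst s0)" and pg: "proj g = FI_of m l (fst t0)"
    using s0 t0 by (simp_all add: proj_FIh_of)
  have b: "fst s0 permutes {..<m}" using s0 fst_Shat by (force simp: Sym_def)
  have key: "FI_of n l (a \<circ> b) = FI_of n l (fst t0 \<circ> fst s0)"
    if ha: "a \<in> proj g" and hb: "b \<in> proj f" for a b
  proof -
    obtain \<tau> where "\<tau> \<in> Sym (l-m)" "a = fst t0 \<circ> sh m \<tau>" using ha pg t0(1) FI_of_mem[of m l a "fst t0"] by auto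
    moreover obtain \<rho> where "\<rho> \<in> Sym (m-n)" "b = fst s0 \<circ> sh n \<rho>" using hb pf s0(1) FI_of_mem[of n m b "fst s0"] by auto
    ultimately show ?thesis using FI_WD[OF s0(1) t0(1) b] by simp
  qed
  have "fst s \<in> proj f" "fst t \<in> proj g" using sf tg by (auto simp: proj_def)
  then have "(SOME s. s \<in> proj f) \<in> proj f" "(SOME t. t \<in> proj g) \<in> proj g" by (metis someI)+
  then have "FI_comp n m l (proj f) (proj g) = FI_of n l (fst t0 \<circ> fst s0)"
    unfolding FI_comp_def si1_def using key by blast
  moreover have "proj (FIh_comp n m l f g) = FI_of n l (fst t0 \<circ> fst s0)"
    using c key[OF \<open>fst t \<in> proj g\<close> \<open>fst s \<in> proj f\<close>] by (simp add: proj_FIh_of shat_mult_def)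
  ultimately show ?thesis using mem by simp
qed

theorem mainTheorem9:
  fixes M :: "nat \<Rightarrow> 'a monoid" and act :: "nat \<Rightarrow> nat \<Rightarrow> shat set \<Rightarrow> 'a \<Rightarrow> 'a"
  assumes "FIh_module M act"
  shows "factors_through_FI M act \<longleftrightarrow>
         (\<forall>n. \<forall>x \<in> carrier (M n). act n n (FIh_of n n (e2 n)) x = x)"
proof
  assume "factors_through_FI M act"
  then obtain actN where N: "FI_module M actN"
    and fac: "\<forall>n m f. f \<in> FIh n m \<longrightarrow> (\<forall>x \<in> carrier (M n). act n m f x = actN n m (proj f) x)"
    unfolding factors_through_FI_def by blast
  show "\<forall>n. \<forall>x \<in> carrier (M n). act n n (FIh_of n n (e2 n)) x = x"
  proof (intro allI ballI)
    fix n x assume x: "x \<in> carrier (M n)"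
    have mem: "FIh_of n n (e2 n) \<in> FIh n n" using e2_Shat by (auto simp: FIh_def)
    have pe: "proj (FIh_of n n (e2 n)) = FI_id n"
      by (simp add: proj_FIh_of FI_id_def e2_def)
    show "act n n (FIh_of n n (e2 n)) x = x"
      using fac mem x pe N unfolding FI_module_def by metis
  qed
next
  assume hyp: "\<forall>n. \<forall>x \<in> carrier (M n). act n n (FIh_of n n (e2 n)) x = x"
  note mod = assms
  define lift where "lift n m F = (SOME f. f \<in> FIh n m \<and> proj f = F)" for n m F
  define actN where "actN n m F = act n m (lift n m F)" for n m F
  have surj: "\<exists>f. f \<in> FIh n m \<and> proj f = F" if hF: "F \<in> FI n m" for n m F
  proof -
    obtain \<sigma> where "n \<le> m" "\<sigma> \<in> Sym m" "F = FI_of n m \<sigma>"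
      using hF by (auto simp: FI_def split: if_splits)
    moreover obtain s where "s \<in> Shat m" "\<sigma> = fst s"
      using \<open>\<sigma> \<in> Sym m\<close> fst_Shat by (metis imageE)
    ultimately show ?thesis by (auto simp: FIh_def proj_FIh_of)
  qed
  have lift: "lift n m F \<in> FIh n m \<and> proj (lift n m F) = F" if "F \<in> FI n m" for n m F
    unfolding lift_def using someI_ex[OF surj[OF that]] .
  have fromFIh: "proj f \<in> FI n m" if hf: "f \<in> FIh n m" for n m f
  proof -
    obtain s where "n \<le> m" "s \<in> Shat m" "f = FIh_of n m s" using hf by (rule FIh_memE)
    moreover have "fst s \<in> Sym m" using \<open>s \<in> Shat m\<close> fst_Shat by blast
    ultimately show ?thesis by (auto simp: FI_def proj_FIh_of)
  qed
  have agree: "act n m f x = actN n m (proj f) x" if "f \<in> FIh n m" "x \<in> carrier (M n)" for n m f x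
    unfolding actN_def using fiber[OF mod hyp that(1) _ _ that(2)] lift[OF fromFIh[OF that(1)]] by metis
  have "FI_module M actN"
    unfolding FI_module_def
  proof (intro conjI allI impI ballI)
    show "comm_group (M n)" for n using mod by (simp add: FIh_module_def)
  next
    fix n m F assume "F \<in> FI n m"
    then show "actN n m F \<in> hom (M n) (M m)"
      using lift mod unfolding actN_def FIh_module_def by blast
  next
    fix n x assume x: "x \<in> carrier (M n)"
    have mem: "FIh_id n \<in> FIh n n" using id_Shat by (auto simp: FIh_def FIh_id_def)
    have "proj (FIh_id n) = FI_id n" by (simp add: FIh_id_def proj_FIh_of FI_id_def)
    then have "actN n n (FI_id n) x = act n n (FIh_id n) x" using agree[OF mem x] by simp
    also have "\<dots> = x" using mod x unfolding FIh_module_def by blast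
    finally show "actN n n (FI_id n) x = x" .
  next
    fix n m l F G x assume F: "F \<in> FI n m" and G: "G \<in> FI m l" and x: "x \<in> carrier (M n)"
    define f where "f = lift n m F"
    define g where "g = lift m l G"
    have f: "f \<in> FIh n m" "proj f = F" using lift[OF F] f_def by auto
    have g: "g \<in> FIh m l" "proj g = G" using lift[OF G] g_def by auto
    have cp: "FIh_comp n m l f g \<in> FIh n l" "proj (FIh_comp n m l f g) = FI_comp n m l F G"
      using comp_proj[OF f(1) g(1)] f g by auto
    have "actN n l (FI_comp n m l F G) x = act n l (FIh_comp n m l f g) x"
      using agree[OF cp(1) x] cp(2) by simp
    also have "\<dots> = act m l g (act n m f x)"
      using mod f(1) g(1) x unfolding FIh_module_def by blast
    also have "\<dots> = actN m l G (actN n m F x)"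
      unfolding actN_def f_def g_def ..
    finally show "actN n l (FI_comp n m l F G) x = actN m l G (actN n m F x)" .
  qed
  then show "factors_through_FI M act"
    unfolding factors_through_FI_def using agree by blast
qed

end
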